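(* Let $h:\mathbb{R}\to\mathbb{R}$ be a smooth function with $h(T)=\pi/2$ for $T\le 0$, $0<h(T)<\pi/2$ for $0<T<1$, and $h(T)=0$ for $T\ge 1$. For $0\le T<1$ define $B(T)=\exp\left(\int_0^T \cot\bigl(h(z)\bigr)\,dz\right)$. Then $B(T)\to\infty$ as $T\to 1_-$, and for every integer $n\ge 0$ the $n$-th derivative of $1/B$ satisfies $\frac{d^n}{dT^n}\bigl(1/B(T)\bigr)\to 0$ as $T\to 1_-$.
   Context: Here $\cot$ denotes the cotangent; note that $\cot h(T)>0$ for $0<T<1$. *)

theory Defs
  imports "HOL-Analysis.Analysis"
begin

definition smooth :: "(real \<Rightarrow> real) \<Rightarrow> bool" where
  "smooth f \<longleftrightarrow> (\<forall>n x. ((deriv ^^ n) f) differentiable (at x))"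

definition Bfun :: "(real \<Rightarrow> real) \<Rightarrow> real \<Rightarrow> real" where
  "Bfun h T = exp (integral {0..T} (\<lambda>z. cot (h z)))"

end

theory Submission
  imports Defs
begin

locale hs =
  fixes h :: "real \<Rightarrow> real"
  assumes sm: "smooth h"
    and h0: "\<And>T. T \<le> 0 \<Longrightarrow> h T = pi / 2"
    and hmid: "\<And>T. 0 < T \<Longrightarrow> T < 1 \<Longrightarrow> 0 < h T \<and> h T < pi / 2"
    and h1: "\<And>T. 1 \<le> T \<Longrightarrow> h T = 0"
begin

definition cc :: "real \<Rightarrow> real" where "cc x = cot (h x)"
definition ww :: "real \<Rightarrow> real" where "ww x = 1 + 1 / sin (h x)"
definition tame :: "(real \<Rightarrow> real) \<Rightarrow> bool" where
  "tame f \<longleftrightarrow> (\<exists>C m. eventually (\<lambda>x. \<bar>f x\<bar> \<le> C * ww x ^ m) (at_left 1))"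

inductive good :: "(real \<Rightarrow> real) \<Rightarrow> bool" where
  gconst: "good (\<lambda>x. k)"
| gc: "good cc"
| gh: "good ((deriv ^^ k) h)"
| gadd: "good f \<Longrightarrow> good g \<Longrightarrow> good (\<lambda>x. f x + g x)"
| gmul: "good f \<Longrightarrow> good g \<Longrightarrow> good (\<lambda>x. f x * g x)"

lemma hd: "((deriv ^^ k) h has_real_derivative (deriv ^^ (Suc k)) h x) (at x)"
  using sm unfolding smooth_def by (simp add: DERIV_deriv_iff_real_differentiable)

lemma hcont: "isCont ((deriv ^^ k) h) x"
  using hd DERIV_isCont by blast

lemma hcont0: "isCont h x"
  using hcont[where k=0 and x=x] by simp

lemma hdd: "(h has_real_derivative deriv h x) (at x)"
  using hd[of 0] by simp

lemma ev01: "eventually (\<lambda>x. 0 < x \<and> x < 1) (at_left (1::real))"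
  using eventually_at_left_real[of 0 1] by simp

lemma hpos: "0 \<le> x \<Longrightarrow> x < 1 \<Longrightarrow> 0 < h x \<and> h x \<le> pi / 2"
  proof (cases "x = 0")
  case True
  have "h 0 = pi / 2" using h0 by simp
  then have "0 < h 0" "h 0 \<le> pi / 2" using pi_gt_zero by linarith+
  then show ?thesis using True by simp
qed (use hmid[of x] in auto)

lemma sinpos: "0 \<le> x \<Longrightarrow> x < 1 \<Longrightarrow> 0 < sin (h x)"
  using hpos[of x] by (intro sin_gt_zero) auto

lemma cospos: "0 < x \<Longrightarrow> x < 1 \<Longrightarrow> 0 < cos (h x)"
  using hmid[of x] by (intro cos_gt_zero) auto

lemma hnonneg: "0 \<le> h x"
  proof (cases "x < 0")
  case True
  have "h x = pi / 2" using h0 True by simp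
  then show ?thesis using pi_gt_zero by linarith
next
  case False then show ?thesis using hpos[of x] h1[of x] by (cases "x < 1") auto
qed

lemma dh1: "deriv h 1 = 0"
  by (rule DERIV_local_min[OF hdd, of 1]) (auto simp: h1 hnonneg)

lemma ww_ge1: "0 < x \<Longrightarrow> x < 1 \<Longrightarrow> 1 \<le> ww x"
  using sinpos[of x] by (simp add: ww_def)

lemma cc_deriv: "0 < x \<Longrightarrow> x < 1 \<Longrightarrow>
   (cc has_real_derivative (-1) * ((deriv ^^ Suc 0) h x * (1 + cc x * cc x))) (at x)"
proof -
  assume x: "0 < x" "x < 1"
  have s: "sin (h x) \<noteq> 0" using sinpos[of x] x by simp
  have eq: "(-inverse ((sin (h x))\<^sup>2)) * deriv h x = (-1) * ((deriv ^^ Suc 0) h x * (1 + cc x * cc x))"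
    using s sin_cos_squared_add[of "h x"] by (simp add: cc_def cot_def field_simps power2_eq_square)
  have "((\<lambda>x. cot (h x)) has_real_derivative (-1) * ((deriv ^^ Suc 0) h x * (1 + cc x * cc x))) (at x)"
    by (rule DERIV_cong[OF DERIV_chain2[OF DERIV_cot[OF s] hdd] eq])
  then show ?thesis by (simp only: cc_def[abs_def])
qed

lemma good_deriv: "good f \<Longrightarrow> \<exists>f'. good f' \<and> (\<forall>x. 0 < x \<longrightarrow> x < 1 \<longrightarrow> (f has_real_derivative f' x) (at x))"
proof (induction rule: good.induct)
  case (gconst k)
  then show ?case by (intro exI[of _ "\<lambda>x. 0"]) (auto intro: good.intros)
next
  case gc
  show ?case
  proof (intro exI conjI)
    show "good (\<lambda>x. (-1) * ((deriv ^^ Suc 0) h x * (1 + cc x * cc x)))"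
      by (intro good.intros)
  qed (use cc_deriv in blast)
next
  case (gh k)
  have "good ((deriv ^^ Suc k) h)" by (rule good.gh)
  then show ?case using hd by blast
next
  case (gadd f g)
  then obtain f' g' where "good f'" "good g'"
    "\<forall>x. 0 < x \<longrightarrow> x < 1 \<longrightarrow> (f has_real_derivative f' x) (at x)"
    "\<forall>x. 0 < x \<longrightarrow> x < 1 \<longrightarrow> (g has_real_derivative g' x) (at x)" by blast
  then show ?case
    by (intro exI[of _ "\<lambda>x. f' x + g' x"]) (auto intro: good.intros DERIV_add)
next
  case (gmul f g)
  then obtain f' g' where "good f'" "good g'"
    "\<forall>x. 0 < x \<longrightarrow> x < 1 \<longrightarrow> (f has_real_derivative f' x) (at x)"
    "\<forall>x. 0 < x \<longrightarrow> x < 1 \<longrightarrow> (g has_real_derivative g' x) (at x)" by blast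
  with gmul.hyps show ?case
    by (intro exI[of _ "\<lambda>x. f' x * g x + g' x * f x"]) (auto intro: good.intros DERIV_mult)
qed

lemma tame_aux: "1 \<le> (w::real) \<Longrightarrow> \<bar>a\<bar> \<le> C * w ^ m \<Longrightarrow> m \<le> k \<Longrightarrow> \<bar>a\<bar> \<le> \<bar>C\<bar> * w ^ k"
proof -
  assume w: "1 \<le> w" and a: "\<bar>a\<bar> \<le> C * w ^ m" and mk: "m \<le> k"
  have "C * w ^ m \<le> \<bar>C\<bar> * w ^ m" by (rule mult_right_mono) (use w in auto)
  also have "\<dots> \<le> \<bar>C\<bar> * w ^ k" by (rule mult_left_mono) (use w mk power_increasing in auto)
  finally show ?thesis using a by linarith
qed

lemma good_tame: "good f \<Longrightarrow> tame f"
proof (induction rule: good.induct)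
  case (gconst k)
  show ?case unfolding tame_def by (intro exI[of _ "\<bar>k\<bar>"] exI[of _ 0]) simp
next
  case gc
  have "eventually (\<lambda>x. \<bar>cc x\<bar> \<le> 1 * ww x ^ 1) (at_left 1)"
    using ev01
  proof eventually_elim
    case (elim x)
    have s: "0 < sin (h x)" using sinpos[of x] elim by simp
    have "\<bar>cc x\<bar> = \<bar>cos (h x)\<bar> / sin (h x)" using s by (simp add: cc_def cot_def abs_divide)
    also have "\<dots> \<le> 1 / sin (h x)" using s by (intro divide_right_mono) auto
    also have "\<dots> \<le> ww x" by (simp add: ww_def)
    finally show ?case by simp
  qed
  then show ?case unfolding tame_def by blast
next
  case (gh k)
  have "((deriv ^^ k) h \<longlongrightarrow> (deriv ^^ k) h 1) (at 1)"
    using hcont[where k=k and x=1] unfolding isCont_def .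
  then have "((deriv ^^ k) h \<longlongrightarrow> (deriv ^^ k) h 1) (at_left 1)"
    by (rule tendsto_mono[OF at_le, rotated]) simp
  then have "((\<lambda>x. \<bar>(deriv ^^ k) h x\<bar>) \<longlongrightarrow> \<bar>(deriv ^^ k) h 1\<bar>) (at_left 1)"
    by (rule tendsto_rabs)
  then have "eventually (\<lambda>x. \<bar>(deriv ^^ k) h x\<bar> < \<bar>(deriv ^^ k) h 1\<bar> + 1) (at_left 1)"
    by (rule order_tendstoD) simp
  then have "eventually (\<lambda>x. \<bar>(deriv ^^ k) h x\<bar> \<le> (\<bar>(deriv ^^ k) h 1\<bar> + 1) * ww x ^ 0) (at_left 1)"
    by eventually_elim simp
  then show ?case unfolding tame_def by blast
next
  case (gadd f g)
  from gadd.IH obtain C1 m1 C2 m2 where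
    e1: "eventually (\<lambda>x. \<bar>f x\<bar> \<le> C1 * ww x ^ m1) (at_left 1)" and
    e2: "eventually (\<lambda>x. \<bar>g x\<bar> \<le> C2 * ww x ^ m2) (at_left 1)"
    unfolding tame_def by blast
  have "eventually (\<lambda>x. \<bar>f x + g x\<bar> \<le> (\<bar>C1\<bar> + \<bar>C2\<bar>) * ww x ^ (m1 + m2)) (at_left 1)"
    using e1 e2 ev01
  proof eventually_elim
    case (elim x)
    have w: "1 \<le> ww x" using ww_ge1 elim by auto
    have "\<bar>f x\<bar> \<le> \<bar>C1\<bar> * ww x ^ (m1 + m2)" by (rule tame_aux[OF w elim(1)]) simp
    moreover have "\<bar>g x\<bar> \<le> \<bar>C2\<bar> * ww x ^ (m1 + m2)" by (rule tame_aux[OF w elim(2)]) simp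
    ultimately show ?case by (simp add: distrib_right)
  qed
  then show ?case unfolding tame_def by blast
next
  case (gmul f g)
  from gmul.IH obtain C1 m1 C2 m2 where
    e1: "eventually (\<lambda>x. \<bar>f x\<bar> \<le> C1 * ww x ^ m1) (at_left 1)" and
    e2: "eventually (\<lambda>x. \<bar>g x\<bar> \<le> C2 * ww x ^ m2) (at_left 1)"
    unfolding tame_def by blast
  have "eventually (\<lambda>x. \<bar>f x * g x\<bar> \<le> (C1 * C2) * ww x ^ (m1 + m2)) (at_left 1)"
    using e1 e2
  proof eventually_elim
    case (elim x)
    have "\<bar>f x * g x\<bar> = \<bar>f x\<bar> * \<bar>g x\<bar>" by (simp add: abs_mult)
    also have "\<dots> \<le> (C1 * ww x ^ m1) * (C2 * ww x ^ m2)"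
      by (rule mult_mono) (use elim in auto)
    also have "\<dots> = (C1 * C2) * ww x ^ (m1 + m2)" by (simp add: power_add)
    finally show ?case .
  qed
  then show ?case unfolding tame_def by blast
qed

definition II :: "real \<Rightarrow> real" where "II x = integral {0..x} (\<lambda>z. cot (h z))"
definition FF :: "real \<Rightarrow> real" where "FF x = 1 / Bfun h x"

lemma FF_eq: "FF x = exp (- II x)"
  by (simp add: FF_def Bfun_def II_def exp_minus inverse_eq_divide)

lemma FF_pos: "0 < FF x" by (simp add: FF_eq)

lemma II_deriv: "0 < x \<Longrightarrow> x < 1 \<Longrightarrow> (II has_real_derivative cc x) (at x)"
proof -
  assume x: "0 < x" "x < 1"
  define b where "b = (1 + x) / 2"
  have b: "x < b" "b < 1" using x by (auto simp: b_def)
  have "continuous_on {0..b} (\<lambda>z. cot (h z))"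
  proof (intro continuous_at_imp_continuous_on ballI)
    fix z assume "z \<in> {0..b}"
    then have "0 \<le> z" "z < 1" using b by auto
    then show "isCont (\<lambda>z. cot (h z)) z"
      using sinpos[of z] hcont0[of z] by (intro isCont_cot') auto
  qed
  from integral_has_real_derivative[OF this, of x]
  have "((\<lambda>y. integral {0..y} (\<lambda>z. cot (h z))) has_real_derivative cot (h x)) (at x within {0..b})"
    using x b by auto
  then show ?thesis using x b by (simp add: at_within_Icc_at II_def[abs_def] cc_def)
qed

lemma FF_deriv: "0 < x \<Longrightarrow> x < 1 \<Longrightarrow> (FF has_real_derivative (- cc x * FF x)) (at x)"
proof -
  assume x: "0 < x" "x < 1"
  have FF: "FF = (\<lambda>x. exp (- II x))" by (simp add: fun_eq_iff FF_eq)
  show ?thesis unfolding FF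
    by (auto intro!: derivative_eq_intros II_deriv x)
qed

lemma FF_structure: "\<exists>p. good p \<and> (\<forall>x. 0 < x \<longrightarrow> x < 1 \<longrightarrow> (deriv ^^ n) FF x = FF x * p x)"
proof (induction n)
  case 0
  have "good (\<lambda>x. 1)" by (rule gconst)
  then show ?case by (intro exI[of _ "\<lambda>x. 1"]) simp
next
  case (Suc n)
  then obtain p where p: "good p" "\<forall>x. 0 < x \<longrightarrow> x < 1 \<longrightarrow> (deriv ^^ n) FF x = FF x * p x" by blast
  from good_deriv[OF p(1)] obtain p' where p': "good p'"
    "\<forall>x. 0 < x \<longrightarrow> x < 1 \<longrightarrow> (p has_real_derivative p' x) (at x)" by blast
  have g: "good (\<lambda>x. (-1) * (cc x * p x) + p' x)"
    by (rule gadd[OF gmul[OF gconst gmul[OF gc p(1)]] p'(1)])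
  have "\<forall>x. 0 < x \<longrightarrow> x < 1 \<longrightarrow> (deriv ^^ Suc n) FF x = FF x * ((-1) * (cc x * p x) + p' x)"
  proof (intro allI impI)
    fix x :: real assume x: "0 < x" "x < 1"
    have ev: "eventually (\<lambda>y. y \<in> {0<..<1}) (nhds x)"
      by (rule eventually_nhds_in_open) (use x in auto)
    have "(deriv ^^ Suc n) FF x = deriv ((deriv ^^ n) FF) x" by simp
    also have "\<dots> = deriv (\<lambda>y. FF y * p y) x"
      by (rule deriv_cong_ev[OF eventually_mono[OF ev]]) (use p(2) in auto)
    also have "\<dots> = (- cc x * FF x) * p x + p' x * FF x"
      by (rule DERIV_imp_deriv[OF DERIV_mult[OF FF_deriv[OF x] p'(2)[rule_format, OF x]]])
    also have "\<dots> = FF x * ((-1) * (cc x * p x) + p' x)" by (simp add: algebra_simps)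
    finally show "(deriv ^^ Suc n) FF x = FF x * ((-1) * (cc x * p x) + p' x)" .
  qed
  with g show ?case by blast
qed

lemma hle: "0 < T \<Longrightarrow> T < 1 \<Longrightarrow> (\<forall>z. T < z \<and> z < 1 \<longrightarrow> \<bar>deriv h z\<bar> \<le> 1) \<Longrightarrow> h T \<le> 1 - T"
proof -
  assume T: "0 < T" "T < 1" and d: "\<forall>z. T < z \<and> z < 1 \<longrightarrow> \<bar>deriv h z\<bar> \<le> 1"
  have "continuous_on {T..1} h" by (intro continuous_at_imp_continuous_on ballI hcont0)
  from MVT[OF T(2) this] obtain l z where lz: "T < z" "z < 1" "DERIV h z :> l" "h 1 - h T = (1 - T) * l"
    using hdd real_differentiable_def by blast
  have "l = deriv h z" using DERIV_unique[OF lz(3) hdd] .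
  then have "\<bar>l\<bar> \<le> 1" using d lz by auto
  have hT: "h T = - ((1 - T) * l)" using lz(4) h1[of 1] by simp
  have "h T \<le> \<bar>(1 - T) * l\<bar>" unfolding hT by (rule abs_ge_minus_self)
  also have "\<dots> = (1 - T) * \<bar>l\<bar>" using T by (simp add: abs_mult)
  finally have "h T \<le> (1 - T) * \<bar>l\<bar>" .
  also have "\<dots> \<le> 1 - T" using \<open>\<bar>l\<bar> \<le> 1\<close> T by (simp add: mult_left_le)
  finally show ?thesis .
qed

definition psi :: "nat \<Rightarrow> real \<Rightarrow> real" where
  "psi m y = - II y - real m * ln (sin (h y)) - (1/8) * ln (1 - y)"

lemma psi_deriv: "0 < y \<Longrightarrow> y < 1 \<Longrightarrow>
  (psi m has_real_derivative (- cc y - real m * (cos (h y) * deriv h y / sin (h y)) + (1/8) / (1 - y))) (at y)"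
proof -
  assume y: "0 < y" "y < 1"
  have s: "0 < sin (h y)" using sinpos[of y] y by simp
  have d2: "((\<lambda>z. ln (sin (h z))) has_real_derivative (1 / sin (h y)) * (cos (h y) * deriv h y)) (at y)"
    by (rule DERIV_chain2[OF DERIV_ln_divide[OF s] DERIV_chain2[OF DERIV_sin hdd]])
  have d3: "((\<lambda>z. ln (1 - z)) has_real_derivative (1 / (1 - y)) * (0 - 1)) (at y)"
    by (rule DERIV_chain2[OF DERIV_ln_divide DERIV_diff[OF DERIV_const DERIV_ident]]) (use y in simp)
  have "((\<lambda>z. - II z - real m * ln (sin (h z)) - (1/8) * ln (1 - z)) has_real_derivative
     (- cc y - real m * ((1 / sin (h y)) * (cos (h y) * deriv h y)) - (1/8) * ((1 / (1 - y)) * (0 - 1)))) (at y)"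
    by (intro DERIV_diff DERIV_minus DERIV_cmult II_deriv y d2 d3)
  then show ?thesis unfolding psi_def[abs_def]
    by (rule DERIV_cong) (simp add: field_simps)
qed

lemma psi_deriv_nonpos:
  assumes y: "0 < y" "y < 1" and d: "\<bar>deriv h y\<bar> \<le> 1 / (4 * (real m + 1))"
    and co: "1/2 \<le> cos (h y)" and hy: "h y \<le> 1 - y"
  shows "- cc y - real m * (cos (h y) * deriv h y / sin (h y)) + (1/8) / (1 - y) \<le> 0"
proof -
  have s: "0 < sin (h y)" using sinpos[of y] y by simp
  have hp: "0 < h y" using hmid[of y] y by simp
  have sh: "sin (h y) \<le> 1 - y" using sin_x_le_x[of "h y"] hp hy by simp
  define q where "q = cos (h y) / sin (h y)"
  have ccq: "cc y = q" by (simp add: cc_def cot_def q_def)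
  have q0: "0 < q" using s co by (simp add: q_def)
  have "real m * \<bar>deriv h y\<bar> \<le> real m * (1 / (4 * (real m + 1)))"
    using d by (intro mult_left_mono) auto
  also have "\<dots> \<le> 1/4" by (simp add: field_simps)
  finally have md: "real m * \<bar>deriv h y\<bar> \<le> 1/4" .
  have t2: "- (real m * (cos (h y) * deriv h y / sin (h y))) \<le> q / 4"
  proof -
    have "- (real m * (cos (h y) * deriv h y / sin (h y))) = - (q * (real m * deriv h y))"
      by (simp add: q_def field_simps)
    also have "\<dots> \<le> q * (real m * \<bar>deriv h y\<bar>)"
    proof -
      have "- (real m * deriv h y) \<le> real m * \<bar>deriv h y\<bar>"
        using mult_left_mono[of "- deriv h y" "\<bar>deriv h y\<bar>" "real m"] by simp
      then show ?thesis using q0 mult_left_mono[of "- (real m * deriv h y)" "real m * \<bar>deriv h y\<bar>" q] by simp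
    qed
    also have "\<dots> \<le> q * (1/4)" using md q0 by (intro mult_left_mono) auto
    finally show ?thesis by simp
  qed
  have t3: "(1/8) / (1 - y) \<le> q / 4"
  proof -
    have "1 / (2 * (1 - y)) \<le> 1 / (2 * sin (h y))"
      using s sh by (intro divide_left_mono) auto
    also have "\<dots> \<le> q" using co s by (simp add: q_def field_simps)
    finally show ?thesis using y by (simp add: field_simps)
  qed
  show ?thesis using t2 t3 q0 ccq by linarith
qed

lemma decay: "\<exists>K. eventually (\<lambda>x. FF x \<le> K * sin (h x) ^ m * (1 - x) powr (1/8)) (at_left 1)"
proof -
  have hc1: "isCont (deriv h) 1"
    using hcont[where k="Suc 0" and x=1] by simp
  have "(deriv h \<longlongrightarrow> 0) (at 1)"
    using hc1 unfolding isCont_def dh1 .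
  then have "(deriv h \<longlongrightarrow> 0) (at_left 1)"
    by (rule tendsto_mono[OF at_le, rotated]) simp
  then have "((\<lambda>x. \<bar>deriv h x\<bar>) \<longlongrightarrow> 0) (at_left 1)"
    by (rule tendsto_rabs_zero)
  then have e1: "eventually (\<lambda>x. \<bar>deriv h x\<bar> < 1 / (4 * (real m + 1))) (at_left 1)"
    by (rule order_tendstoD) simp
  have h10: "h 1 = 0" by (rule h1) simp
  have "(h \<longlongrightarrow> 0) (at 1)" using hcont0[of 1] unfolding isCont_def h10 .
  then have "(h \<longlongrightarrow> 0) (at_left 1)"
    by (rule tendsto_mono[OF at_le, rotated]) simp
  then have "((\<lambda>x. cos (h x)) \<longlongrightarrow> cos 0) (at_left 1)" by (rule tendsto_cos)
  then have "((\<lambda>x. cos (h x)) \<longlongrightarrow> 1) (at_left 1)" by simp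
  moreover have "(1/2::real) < 1" by simp
  ultimately have e2: "eventually (\<lambda>x. 1/2 < cos (h x)) (at_left 1)"
    by (rule order_tendstoD)
  have "eventually (\<lambda>x. \<bar>deriv h x\<bar> < 1 / (4 * (real m + 1)) \<and> 1/2 < cos (h x) \<and> 0 < x \<and> x < 1) (at_left 1)"
    using e1 e2 ev01 by eventually_elim auto
  then obtain t1 where t1: "t1 < 1" and P: "\<And>y. t1 < y \<Longrightarrow> y < 1 \<Longrightarrow>
      \<bar>deriv h y\<bar> < 1 / (4 * (real m + 1)) \<and> 1/2 < cos (h y) \<and> 0 < y \<and> y < 1"
    unfolding eventually_at_left_field by blast
  define t0 where "t0 = (max t1 0 + 1) / 2"
  have t0: "t1 < t0" "0 < t0" "t0 < 1" using t1 by (auto simp: t0_def)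
  have dle1: "\<bar>deriv h y\<bar> \<le> 1" if "t1 < y" "y < 1" for y
  proof -
    have "1 / (4 * (real m + 1)) \<le> 1" by (simp add: field_simps)
    then show ?thesis using P[OF that] by linarith
  qed
  have key: "FF T \<le> exp (psi m t0) * sin (h T) ^ m * (1 - T) powr (1/8)" if T: "t0 < T" "T < 1" for T
  proof -
    have dpsi: "\<exists>D. (psi m has_real_derivative D) (at y) \<and> D \<le> 0" if y: "t1 < y" "y < 1" for y
    proof -
      have yy: "0 < y" "y < 1" using P[OF y] by auto
      have "h y \<le> 1 - y"
        by (rule hle[OF yy]) (use dle1 y in auto)
      moreover have "\<bar>deriv h y\<bar> \<le> 1 / (4 * (real m + 1))" "1/2 \<le> cos (h y)"
        using P[OF y] by auto
      ultimately show ?thesis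
        using psi_deriv[OF yy, of m] psi_deriv_nonpos[OF yy, of m] by blast
    qed
    have con: "continuous_on {t0..T} (psi m)"
    proof (intro continuous_at_imp_continuous_on ballI)
      fix y assume "y \<in> {t0..T}"
      then have "t1 < y" "y < 1" using t0 T by auto
      then obtain D where "(psi m has_real_derivative D) (at y)" using dpsi by blast
      then show "isCont (psi m) y" by (rule DERIV_isCont)
    qed
    have mono: "psi m T \<le> psi m t0"
    proof (rule DERIV_nonpos_imp_decreasing_open[of t0 T "psi m"])
      show "t0 \<le> T" using T by simp
      fix y assume "t0 < y" "y < T"
      then show "\<exists>D. (psi m has_real_derivative D) (at y) \<and> D \<le> 0"
        using dpsi[of y] t0 T by simp
    next
      show "continuous_on {t0..T} (psi m)" by (rule con)
    qed
    have s: "0 < sin (h T)" using sinpos[of T] T t0 by simp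
    have "FF T = exp (psi m T + real m * ln (sin (h T)) + (1/8) * ln (1 - T))"
      by (simp add: FF_eq psi_def)
    also have "\<dots> = exp (psi m T) * sin (h T) ^ m * (1 - T) powr (1/8)"
    proof -
      have a: "exp (real m * ln (sin (h T))) = sin (h T) ^ m"
        using s by (simp add: exp_of_nat_mult)
      have b: "exp ((1/8) * ln (1 - T)) = (1 - T) powr (1/8)"
        using T by (simp add: powr_def mult.commute)
      show ?thesis by (simp only: exp_add a b)
    qed
    also have "\<dots> \<le> exp (psi m t0) * sin (h T) ^ m * (1 - T) powr (1/8)"
      using mono s by (intro mult_right_mono) auto
    finally show ?thesis .
  qed
  have "eventually (\<lambda>x. FF x \<le> exp (psi m t0) * sin (h x) ^ m * (1 - x) powr (1/8)) (at_left 1)"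
    unfolding eventually_at_left_field using t0 key by blast
  then show ?thesis by blast
qed

lemma main_n: "((deriv ^^ n) FF \<longlongrightarrow> 0) (at_left 1)"
proof -
  obtain p where p: "good p" "\<forall>x. 0 < x \<longrightarrow> x < 1 \<longrightarrow> (deriv ^^ n) FF x = FF x * p x"
    using FF_structure by blast
  obtain C m where Cm: "eventually (\<lambda>x. \<bar>p x\<bar> \<le> C * ww x ^ m) (at_left 1)"
    using good_tame[OF p(1)] unfolding tame_def by blast
  obtain K where K: "eventually (\<lambda>x. FF x \<le> K * sin (h x) ^ m * (1 - x) powr (1/8)) (at_left 1)"
    using decay by blast
  have "eventually (\<lambda>x. norm ((deriv ^^ n) FF x) \<le> (C * 2 ^ m) * (K * (1 - x) powr (1/8))) (at_left 1)"
    using Cm K ev01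
  proof eventually_elim
    case (elim x)
    have s: "0 < sin (h x)" using sinpos[of x] elim by simp
    have s1: "sin (h x) \<le> 1" by simp
    have w1: "1 \<le> ww x" using ww_ge1 elim by auto
    have w2: "ww x \<le> 2 / sin (h x)"
    proof -
      have "1 \<le> 1 / sin (h x)" using s s1 by (simp add: field_simps)
      then show ?thesis by (simp add: ww_def)
    qed
    have C0: "0 \<le> C"
    proof -
      have "0 \<le> C * ww x ^ m" using elim(1) by linarith
      moreover have "0 < ww x ^ m" using w1 by simp
      ultimately show ?thesis by (simp add: zero_le_mult_iff)
    qed
    have F0: "0 < FF x" by (rule FF_pos)
    have "norm ((deriv ^^ n) FF x) = FF x * \<bar>p x\<bar>"
      using p(2) elim F0 by (simp add: abs_mult)
    also have "\<dots> \<le> FF x * (C * ww x ^ m)"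
      using elim(1) F0 by (intro mult_left_mono) auto
    also have "\<dots> \<le> FF x * (C * (2 / sin (h x)) ^ m)"
      using F0 C0 w1 w2 by (intro mult_left_mono power_mono) auto
    also have "\<dots> = (C * 2 ^ m) * (FF x / sin (h x) ^ m)"
      by (simp add: power_divide)
    also have "\<dots> \<le> (C * 2 ^ m) * (K * (1 - x) powr (1/8))"
    proof (intro mult_left_mono)
      show "FF x / sin (h x) ^ m \<le> K * (1 - x) powr (1/8)"
        using elim(2) s by (simp add: divide_le_eq algebra_simps)
    qed (use C0 in auto)
    finally show ?case .
  qed
  moreover have "((\<lambda>x. (C * 2 ^ m) * (K * (1 - x) powr (1/8))) \<longlongrightarrow> 0) (at_left 1)"
  proof (intro tendsto_mult_right_zero tendsto_zero_powrI)
    have "((\<lambda>x. 1 - x) \<longlongrightarrow> 1 - 1) (at_left (1::real))" by (intro tendsto_intros)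
    then show "((\<lambda>x. 1 - x) \<longlongrightarrow> 0) (at_left (1::real))" by simp
    show "eventually (\<lambda>x. 0 \<le> 1 - x) (at_left (1::real))" using ev01 by eventually_elim auto
  qed auto
  ultimately show ?thesis by (rule Lim_null_comparison)
qed

end

theorem mainTheorem1:
  fixes h :: "real \<Rightarrow> real"
  assumes "smooth h"
    and "\<And>T. T \<le> 0 \<Longrightarrow> h T = pi / 2"
    and "\<And>T. 0 < T \<Longrightarrow> T < 1 \<Longrightarrow> 0 < h T \<and> h T < pi / 2"
    and "\<And>T. 1 \<le> T \<Longrightarrow> h T = 0"
  shows "filterlim (Bfun h) at_top (at_left 1) \<and>
         (\<forall>n::nat. (((deriv ^^ n) (\<lambda>T. 1 / Bfun h T)) \<longlongrightarrow> 0) (at_left 1))"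
proof -
  interpret hs h using assms by unfold_locales
  have FFe: "(\<lambda>T. 1 / Bfun h T) = FF" by (simp add: fun_eq_iff FF_def)
  have Be: "Bfun h = (\<lambda>x. inverse (FF x))" by (simp add: fun_eq_iff FF_def)
  have "filterlim (\<lambda>x. inverse (FF x)) at_top (at_left 1)"
    by (rule filterlim_inverse_at_top) (use main_n[of 0] FF_pos in auto)
  then have "filterlim (Bfun h) at_top (at_left 1)" by (simp only: Be)
  moreover have "\<forall>n::nat. (((deriv ^^ n) (\<lambda>T. 1 / Bfun h T)) \<longlongrightarrow> 0) (at_left 1)"
    unfolding FFe using main_n by blast
  ultimately show ?thesis by blast
qed

end
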